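(* Let $a,b$ be integers with $-a+1\le b\le -2$ and let $(T_n)_{n\ge0}$ be defined by $T_0=1$, $T_1=a$, $T_2=a^2+b$, $T_{n+3}=aT_{n+2}+bT_{n+1}+T_n$. Then every nonnegative integer $n$ can be uniquely expressed as $n=\sum_{i=0}^N d_iT_i$, where: - $d_i\in\{0,\dots,a-1\}$; - for all $j\ge k\ge 0$, $d_jd_{j-1}\cdots d_{j-k}\le_{\mathrm{lex}}(a-1)(a+b-1)(a+b)\cdots(a+b)$. Here the right-hand word has length $k+1$: it consists of $a-1$, then $a+b-1$, followed by $k-1$ copies of $a+b$ (truncated appropriately when $k\le1$). The relation $\le_{\mathrm{lex}}$ is the lexicographic order on words of equal length. *)

theory Defs
  imports Main
begin

fun T :: "int \<Rightarrow> int \<Rightarrow> nat \<Rightarrow> int" where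
  "T a b 0 = 1"
| "T a b (Suc 0) = a"
| "T a b (Suc (Suc 0)) = a^2 + b"
| "T a b (Suc (Suc (Suc n))) =
     a * T a b (Suc (Suc n)) + b * T a b (Suc n) + T a b n"

definition lex_le :: "nat \<Rightarrow> (nat \<Rightarrow> int) \<Rightarrow> (nat \<Rightarrow> int) \<Rightarrow> bool" where
  "lex_le L w u \<longleftrightarrow>
     (\<forall>m<L. w m = u m) \<or> (\<exists>m<L. (\<forall>l<m. w l = u l) \<and> w m < u m)"

definition bound_word :: "int \<Rightarrow> int \<Rightarrow> nat \<Rightarrow> int" where
  "bound_word a b m = (if m = 0 then a - 1 else if m = 1 then a + b - 1 else a + b)"

definition admissible :: "int \<Rightarrow> int \<Rightarrow> (nat \<Rightarrow> int) \<Rightarrow> bool" where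
  "admissible a b d \<longleftrightarrow>
     (\<forall>i. 0 \<le> d i \<and> d i \<le> a - 1) \<and>
     (\<exists>N. \<forall>i>N. d i = 0) \<and>
     (\<forall>j k. k \<le> j \<longrightarrow> lex_le (Suc k) (\<lambda>m. d (j - m)) (bound_word a b))"

end

theory Submission
  imports Defs
begin

definition W :: "(nat \<Rightarrow> int) \<Rightarrow> nat \<Rightarrow> nat \<Rightarrow> int" where
  "W d L = (\<lambda>m. d (L - Suc m))"

definition V :: "int \<Rightarrow> int \<Rightarrow> nat \<Rightarrow> (nat \<Rightarrow> int) \<Rightarrow> int" where
  "V a b L d = (\<Sum>i<L. d i * T a b i)"

definition adm :: "int \<Rightarrow> int \<Rightarrow> (nat \<Rightarrow> int) \<Rightarrow> bool" where
  "adm a b d \<longleftrightarrow> (\<forall>i. 0 \<le> d i \<and> d i \<le> a - 1) \<and>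
     (\<forall>j. lex_le (Suc j) (W d (Suc j)) (bound_word a b))"

lemma lex_le_0[simp]: "lex_le 0 u w" by (simp add: lex_le_def)

lemma lex_le_Suc: "lex_le (Suc k) u w \<longleftrightarrow> u 0 < w 0 \<or>
   (u 0 = w 0 \<and> lex_le k (\<lambda>m. u (Suc m)) (\<lambda>m. w (Suc m)))"
  by (auto simp: lex_le_def All_less_Suc2 Ex_less_Suc2)

lemma lex_le_cong: "(\<forall>m<L. w m = w' m) \<Longrightarrow> lex_le L u w = lex_le L u w'"
proof (induction L arbitrary: u w w')
  case 0 then show ?case by simp
next
  case (Suc L)
  have "\<forall>m<L. w (Suc m) = w' (Suc m)" using Suc.prems by auto
  from Suc.IH[OF this] Suc.prems show ?case by (simp add: lex_le_Suc)
qed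

lemma lex_le_prefix: "lex_le L u w \<Longrightarrow> K \<le> L \<Longrightarrow> lex_le K u w"
proof (induction K arbitrary: L u w)
  case 0 then show ?case by simp
next
  case (Suc K)
  then obtain L' where L: "L = Suc L'" by (cases L) auto
  with Suc show ?case by (auto simp: lex_le_Suc)
qed

lemma W_0[simp]: "W d (Suc L) 0 = d L" by (simp add: W_def)
lemma W_shift[simp]: "(\<lambda>m. W d (Suc L) (Suc m)) = W d L" by (simp add: W_def)
lemma W_Suc_eq: "W d (Suc j) = (\<lambda>m. d (j - m))" by (simp add: W_def)

lemma V_0[simp]: "V a b 0 d = 0" by (simp add: V_def)
lemma V_Suc: "V a b (Suc L) d = V a b L d + d L * T a b L" by (simp add: V_def)

lemma lex_trans_W:
  "\<not> lex_le L (W u L) (W z L) \<Longrightarrow> \<exists>m<L. (\<forall>i. m < i \<and> i < L \<longrightarrow> z i = u i) \<and> z m < u m"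
proof (induction L)
  case 0 then show ?case by simp
next
  case (Suc L)
  show ?case
  proof (cases "u L = z L")
    case True
    then have "\<not> lex_le L (W u L) (W z L)" using Suc.prems by (simp add: lex_le_Suc)
    from Suc.IH[OF this] obtain m where "m < L" "\<forall>i. m < i \<and> i < L \<longrightarrow> z i = u i" "z m < u m"
      by blast
    then show ?thesis using True by (intro exI[of _ m]) (auto simp: less_Suc_eq)
  next
    case False
    then have "z L < u L" using Suc.prems by (auto simp: lex_le_Suc)
    then show ?thesis by (intro exI[of _ L]) auto
  qed
qed

context
  fixes a b :: int
  assumes a1: "-a + 1 \<le> b" and a2: "b \<le> -2"
begin

lemma T_ident: "T a b (Suc (Suc K)) = (a-1)*T a b (Suc K) + (a+b-1)*T a b K + 1
    + (a+b)*(\<Sum>i<K. T a b i)"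
proof (induction K)
  case 0 then show ?case by (simp add: power2_eq_square algebra_simps)
next
  case (Suc K) then show ?case by (simp add: algebra_simps)
qed

lemma T_ge1: "T a b n \<ge> 1"
proof (induction n rule: less_induct)
  case (less n)
  show ?case
  proof (cases n)
    case 0 then show ?thesis by simp
  next
    case (Suc M)
    show ?thesis
    proof (cases M)
      case 0 then show ?thesis using Suc a1 a2 by simp
    next
      case (Suc K)
      have h1: "T a b (Suc K) \<ge> 1" "T a b K \<ge> 1" using less \<open>n = Suc M\<close> Suc by auto
      have h2: "(\<Sum>i<K. T a b i) \<ge> 0" using less \<open>n = Suc M\<close> Suc
        by (intro sum_nonneg) (smt (verit) lessThan_iff less_SucI)
      have "0 \<le> (a-1)*T a b (Suc K)" "0 \<le> (a+b-1)*T a b K" "0 \<le> (a+b)*(\<Sum>i<K. T a b i)"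
        using h1 h2 a1 a2 by auto
      then show ?thesis using T_ident[of K] unfolding \<open>n = Suc M\<close> Suc by linarith
    qed
  qed
qed

lemma sumT_nonneg: "(\<Sum>i<K. T a b i) \<ge> 0"
  using T_ge1 by (smt (verit) sum_nonneg)

lemma T_lower: "(a-1)*T a b M \<le> T a b (Suc M)"
proof (cases M)
  case 0 then show ?thesis by simp
next
  case (Suc K)
  have "0 \<le> (a+b-1)*T a b K" "0 \<le> (a+b)*(\<Sum>i<K. T a b i)"
    using T_ge1[of K] sumT_nonneg[of K] a1 by auto
  then show ?thesis using T_ident[of K] unfolding Suc by linarith
qed

lemma T_mono: "T a b M \<le> T a b (Suc M)"
proof -
  have "1 * T a b M \<le> (a-1)*T a b M" using T_ge1[of M] a1 a2
    by (intro mult_right_mono) auto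
  then show ?thesis using T_lower[of M] by linarith
qed

lemma T_upper: "T a b (Suc M) \<le> a * T a b M"
proof (cases M)
  case 0 then show ?thesis by simp
next
  case (Suc K)
  show ?thesis
  proof (cases K)
    case 0 then show ?thesis using Suc a2 by (simp add: power2_eq_square)
  next
    case (Suc J)
    have "b * T a b (Suc J) \<le> -2 * T a b (Suc J)"
      using a2 T_ge1[of "Suc J"] by (intro mult_right_mono) auto
    moreover have "T a b J \<le> T a b (Suc J)" by (rule T_mono)
    moreover have "T a b (Suc J) \<ge> 1" by (rule T_ge1)
    ultimately show ?thesis using \<open>M = Suc K\<close> Suc by simp
  qed
qed

lemma T_gt: "int n < T a b n"
proof (induction n)
  case 0 then show ?case by simp
next
  case (Suc n)
  have "2 * T a b n \<le> (a-1)*T a b n" using T_ge1[of n] a1 a2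
    by (intro mult_right_mono) auto
  then show ?case using T_lower[of n] Suc T_ge1[of n] by linarith
qed

lemma V_nonneg: "\<forall>i. 0 \<le> d i \<Longrightarrow> 0 \<le> V a b L d"
  unfolding V_def using T_ge1 by (intro sum_nonneg) (smt (verit) mult_nonneg_nonneg)

lemma bound:
  assumes ad: "adm a b d"
  shows "V a b L d < T a b L \<and>
    (lex_le L (W d L) (\<lambda>_. a+b) \<longrightarrow> V a b L d \<le> (a+b)*(\<Sum>i<L. T a b i))"
proof (induction L rule: less_induct)
  case (less L)
  have dig: "\<And>i. 0 \<le> d i \<and> d i \<le> a - 1" using ad by (simp add: adm_def)
  have win: "\<And>j. lex_le (Suc j) (W d (Suc j)) (bound_word a b)" using ad by (simp add: adm_def)
  show ?case
  proof (cases L)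
    case 0 then show ?thesis by simp
  next
    case (Suc M)
    have IHM: "V a b M d < T a b M"
      "lex_le M (W d M) (\<lambda>_. a+b) \<Longrightarrow> V a b M d \<le> (a+b)*(\<Sum>i<M. T a b i)"
      using less Suc by auto
    have TM: "T a b M \<ge> 1" by (rule T_ge1)
    have A: "V a b (Suc M) d < T a b (Suc M)"
    proof (cases "d M < a - 1")
      case True
      have "d M * T a b M \<le> (a-2) * T a b M" using True TM by (intro mult_right_mono) auto
      moreover have "(a-2) * T a b M + T a b M = (a-1)*T a b M" by (simp add: algebra_simps)
      ultimately show ?thesis using IHM(1) T_lower[of M] by (simp add: V_Suc)
    next
      case False
      then have dM: "d M = a - 1" using dig[of M] by auto
      show ?thesis
      proof (cases M)
        case 0 then show ?thesis using dM by (simp add: V_Suc)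
      next
        case (Suc K)
        have w1: "lex_le (Suc (Suc K)) (W d (Suc (Suc K))) (bound_word a b)" by (rule win)
        then have w2: "lex_le (Suc K) (W d (Suc K)) (\<lambda>m. bound_word a b (Suc m))"
          using dM Suc by (simp add: lex_le_Suc bound_word_def)
        then have w3: "d K < a + b - 1 \<or> (d K = a+b-1 \<and> lex_le K (W d K) (\<lambda>_. a+b))"
          by (simp add: lex_le_Suc bound_word_def)
        have IHK: "V a b K d < T a b K"
          "lex_le K (W d K) (\<lambda>_. a+b) \<Longrightarrow> V a b K d \<le> (a+b)*(\<Sum>i<K. T a b i)"
          using less \<open>L = Suc M\<close> Suc by auto
        have VV: "V a b (Suc M) d = V a b K d + d K * T a b K + (a-1) * T a b (Suc K)"
          using Suc dM by (simp add: V_Suc)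
        have Sn: "0 \<le> (a+b)*(\<Sum>i<K. T a b i)" using sumT_nonneg[of K] a1 by auto
        from w3 show ?thesis
        proof
          assume lt: "d K < a + b - 1"
          have "d K * T a b K \<le> (a+b-2) * T a b K" using lt T_ge1[of K] by (intro mult_right_mono) auto
          moreover have "(a+b-2) * T a b K + T a b K = (a+b-1) * T a b K" by (simp add: algebra_simps)
          ultimately show ?thesis using VV IHK(1) T_ident[of K] Sn unfolding Suc by linarith
        next
          assume eq: "d K = a+b-1 \<and> lex_le K (W d K) (\<lambda>_. a+b)"
          then show ?thesis using VV IHK(2) T_ident[of K] Suc by simp
        qed
      qed
    qed
    have B: "lex_le (Suc M) (W d (Suc M)) (\<lambda>_. a+b) \<Longrightarrow>
       V a b (Suc M) d \<le> (a+b)*(\<Sum>i<Suc M. T a b i)"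
    proof -
      assume h: "lex_le (Suc M) (W d (Suc M)) (\<lambda>_. a+b)"
      then have "d M < a + b \<or> (d M = a+b \<and> lex_le M (W d M) (\<lambda>_. a+b))"
        by (simp add: lex_le_Suc)
      then show ?thesis
      proof
        assume lt: "d M < a + b"
        have "d M * T a b M \<le> (a+b-1) * T a b M" using lt TM by (intro mult_right_mono) auto
        moreover have "(a+b-1) * T a b M + T a b M = (a+b) * T a b M" by (simp add: algebra_simps)
        moreover have "0 \<le> (a+b)*(\<Sum>i<M. T a b i)" using sumT_nonneg[of M] a1 by auto
        ultimately show ?thesis using IHM(1) by (simp add: V_Suc distrib_left)
      next
        assume eq: "d M = a+b \<and> lex_le M (W d M) (\<lambda>_. a+b)"
        then show ?thesis using IHM(2) by (simp add: V_Suc distrib_left)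
      qed
    qed
    show ?thesis using A B Suc by auto
  qed
qed

lemma mono:
  assumes ad: "adm a b u" and wn: "\<forall>i. 0 \<le> w i"
  shows "m < L \<Longrightarrow> (\<forall>i. m < i \<and> i < L \<longrightarrow> u i = w i) \<Longrightarrow> u m < w m \<Longrightarrow> V a b L u < V a b L w"
proof (induction L)
  case 0 then show ?case by simp
next
  case (Suc M)
  show ?case
  proof (cases "M = m")
    case True
    have "V a b m u < T a b m" using bound[OF ad] by blast
    moreover have "0 \<le> V a b m w" using V_nonneg wn by blast
    moreover have "(u m + 1) * T a b m \<le> w m * T a b m"
      using Suc.prems T_ge1[of m] by (intro mult_right_mono) auto
    ultimately show ?thesis using True by (simp add: V_Suc algebra_simps)
  next
    case False
    then have "m < M" using Suc.prems by auto
    then have "V a b M u < V a b M w" using Suc by auto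
    moreover have "u M = w M" using Suc.prems \<open>m < M\<close> by auto
    ultimately show ?thesis by (simp add: V_Suc)
  qed
qed

lemma uniq:
  assumes "adm a b u" "adm a b w"
  shows "V a b L u = V a b L w \<Longrightarrow> \<forall>i<L. u i = w i"
proof (induction L)
  case 0 then show ?case by simp
next
  case (Suc M)
  have un: "\<forall>i. 0 \<le> u i" and wn: "\<forall>i. 0 \<le> w i" using assms by (auto simp: adm_def)
  have "\<not> u M < w M"
    using mono[OF assms(1) wn, of M "Suc M"] Suc.prems by auto
  moreover have "\<not> w M < u M"
    using mono[OF assms(2) un, of M "Suc M"] Suc.prems by auto
  ultimately have e: "u M = w M" by auto
  then have "V a b M u = V a b M w" using Suc.prems by (simp add: V_Suc)
  then show ?case using Suc.IH e by (auto simp: less_Suc_eq)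
qed

lemma exist:
  "0 \<le> n \<Longrightarrow> n < T a b L \<Longrightarrow> \<exists>d. adm a b d \<and> (\<forall>i\<ge>L. d i = 0) \<and> V a b L d = n"
proof (induction L arbitrary: n)
  case 0
  then have "n = 0" by simp
  moreover have "adm a b (\<lambda>_. 0)" using a1 a2
    by (auto simp: adm_def lex_le_Suc W_def bound_word_def)
  ultimately show ?case by (intro exI[of _ "\<lambda>_. 0"]) (simp add: V_def)
next
  case (Suc M)
  define t where "t = T a b M"
  have tp: "t \<ge> 1" using T_ge1 t_def by simp
  define q where "q = n div t"
  define r where "r = n mod t"
  have r0: "0 \<le> r" "r < t" using tp by (auto simp: r_def)
  have nqr: "n = q * t + r" by (simp add: q_def r_def)
  have q0: "0 \<le> q" using Suc.prems tp by (simp add: q_def pos_imp_zdiv_nonneg_iff)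
  have "q * t < a * t" using nqr r0 Suc.prems T_upper[of M, folded t_def] by linarith
  then have qa: "q \<le> a - 1" using tp by (smt (verit) mult_right_mono)
  obtain w where w: "adm a b w" "\<forall>i\<ge>M. w i = 0" "V a b M w = r"
    using Suc.IH[of r] r0 t_def by auto
  define d where "d = w(M := q)"
  have wdig: "\<And>i. 0 \<le> w i \<and> w i \<le> a - 1" using w(1) by (simp add: adm_def)
  have wwin: "\<And>j. lex_le (Suc j) (W w (Suc j)) (bound_word a b)" using w(1) by (simp add: adm_def)
  have Weq: "\<And>j. j < M \<Longrightarrow> W d (Suc j) = W w (Suc j)"
  proof -
    fix j assume "j < M"
    then have "\<And>m. Suc j - Suc m \<noteq> M" by arith
    then show "W d (Suc j) = W w (Suc j)" by (simp add: W_def d_def)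
  qed
  have VM: "V a b M d = V a b M w" unfolding V_def d_def by (intro sum.cong) auto
  have win: "lex_le (Suc j) (W d (Suc j)) (bound_word a b)" for j
  proof -
    consider "j < M" | "j = M" | "j > M" by linarith
    then show ?thesis
    proof cases
      case 1 then show ?thesis using Weq wwin by simp
    next
      case 3
      then have "d j = 0" using w(2) by (simp add: d_def)
      then show ?thesis using a1 a2 by (simp add: lex_le_Suc bound_word_def)
    next
      case 2
      show ?thesis
      proof (cases "q < a - 1")
        case True then show ?thesis using 2 by (simp add: lex_le_Suc bound_word_def d_def)
      next
        case False
        then have qe: "q = a - 1" using qa by simp
        have goal: "lex_le M (W w M) (\<lambda>m. bound_word a b (Suc m))"
        proof (cases M)
          case 0 then show ?thesis by simp
        next
          case (Suc K)
          define z where "z = (\<lambda>i. if i < K then a+b else if i = K then a+b-1 else 0::int)"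
          have zadm: "adm a b z" using a1 a2
            by (auto simp: adm_def z_def lex_le_Suc bound_word_def)
          have VK: "V a b K z = (a+b)*(\<Sum>i<K. T a b i)"
            unfolding V_def sum_distrib_left z_def by (intro sum.cong) auto
          have Vz: "V a b (Suc K) z = (a+b-1) * T a b K + (a+b)*(\<Sum>i<K. T a b i)"
            using VK by (simp add: V_Suc z_def)
          have "r \<le> V a b (Suc K) z"
            using Vz nqr qe Suc.prems T_ident[of K] Suc t_def by (simp add: algebra_simps)
          have lx: "lex_le (Suc K) (W w (Suc K)) (W z (Suc K))"
          proof (rule ccontr)
            assume "\<not> ?thesis"
            from lex_trans_W[OF this] obtain m where
              "m < Suc K" "\<forall>i. m < i \<and> i < Suc K \<longrightarrow> z i = w i" "z m < w m" by blast
            from mono[OF zadm _ this] wdig have "V a b (Suc K) z < V a b (Suc K) w" by auto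
            then show False using \<open>r \<le> V a b (Suc K) z\<close> w(3) Suc by simp
          qed
          have "\<forall>m<Suc K. W z (Suc K) m = bound_word a b (Suc m)"
            by (auto simp: W_def z_def bound_word_def)
          then have "lex_le (Suc K) (W w (Suc K)) (W z (Suc K)) =
              lex_le (Suc K) (W w (Suc K)) (\<lambda>m. bound_word a b (Suc m))"
            by (intro lex_le_cong) simp
          then show ?thesis using lx Suc by simp
        qed
        have "lex_le M (W d M) (\<lambda>m. bound_word a b (Suc m))"
        proof (cases M)
          case 0 then show ?thesis by simp
        next
          case (Suc K) then show ?thesis using Weq[of K] goal by simp
        qed
        then show ?thesis using 2 qe by (simp add: lex_le_Suc bound_word_def d_def)
      qed
    qed
  qed
  have "adm a b d" using win wdig q0 qa by (auto simp: adm_def d_def)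
  moreover have "\<forall>i\<ge>Suc M. d i = 0" using w(2) by (auto simp: d_def)
  moreover have "V a b (Suc M) d = n" using VM w(3) nqr t_def by (simp add: V_Suc d_def algebra_simps)
  ultimately show ?case by blast
qed

end

lemma V_ext: "(\<forall>i\<ge>K. d i = 0) \<Longrightarrow> K \<le> L \<Longrightarrow> V a b L d = V a b K d"
proof (induction L)
  case 0 then show ?case by simp
next
  case (Suc L)
  then show ?case by (cases "K = Suc L") (auto simp: V_Suc)
qed

lemma adm_iff: "admissible a b d \<longleftrightarrow> adm a b d \<and> (\<exists>N. \<forall>i>N. d i = 0)"
proof
  assume "admissible a b d"
  then show "adm a b d \<and> (\<exists>N. \<forall>i>N. d i = 0)"
    by (auto simp: admissible_def adm_def W_Suc_eq)
next
  assume h: "adm a b d \<and> (\<exists>N. \<forall>i>N. d i = 0)"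
  have "lex_le (Suc k) (\<lambda>m. d (j - m)) (bound_word a b)" if "k \<le> j" for j k
    using h that lex_le_prefix[of "Suc j" "\<lambda>m. d (j - m)" "bound_word a b" "Suc k"]
    by (auto simp: adm_def W_Suc_eq)
  then show "admissible a b d" using h by (auto simp: admissible_def adm_def)
qed

lemma sum_to_V: "(\<forall>i>N. d i = 0) \<Longrightarrow> Suc N \<le> L \<Longrightarrow> (\<Sum>i\<le>N. d i * T a b i) = V a b L d"
proof -
  assume h: "\<forall>i>N. d i = 0" "Suc N \<le> L"
  have "(\<Sum>i\<le>N. d i * T a b i) = V a b (Suc N) d" by (simp add: V_def lessThan_Suc_atMost)
  also have "\<dots> = V a b L d" using h by (intro V_ext[symmetric]) auto
  finally show ?thesis .
qed

theorem proposition2p2: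
  fixes a b :: int
  assumes "-a + 1 \<le> b" and "b \<le> -2"
  shows "\<forall>n::nat. \<exists>!d. admissible a b d \<and>
           (\<exists>N. (\<forall>i>N. d i = 0) \<and> int n = (\<Sum>i\<le>N. d i * T a b i))"
proof (intro allI ex_ex1I)
  fix n :: nat
  obtain d where d: "adm a b d" "\<forall>i\<ge>n. d i = 0" "V a b n d = int n"
    using exist[OF assms, of "int n" n] T_gt[OF assms, of n] by auto
  have "(\<Sum>i\<le>n. d i * T a b i) = V a b (Suc n) d" using d(2) by (intro sum_to_V) auto
  also have "\<dots> = V a b n d" using d(2) by (intro V_ext) auto
  finally have "admissible a b d \<and> (\<exists>N. (\<forall>i>N. d i = 0) \<and> int n = (\<Sum>i\<le>N. d i * T a b i))"
    using d by (auto simp: adm_iff intro!: exI[of _ n])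
  then show "\<exists>d. admissible a b d \<and> (\<exists>N. (\<forall>i>N. d i = 0) \<and> int n = (\<Sum>i\<le>N. d i * T a b i))" by blast
next
  fix n :: nat and u w
  assume hu: "admissible a b u \<and> (\<exists>N. (\<forall>i>N. u i = 0) \<and> int n = (\<Sum>i\<le>N. u i * T a b i))"
     and hw: "admissible a b w \<and> (\<exists>N. (\<forall>i>N. w i = 0) \<and> int n = (\<Sum>i\<le>N. w i * T a b i))"
  then obtain N1 N2 where n1: "\<forall>i>N1. u i = 0" "int n = (\<Sum>i\<le>N1. u i * T a b i)"
    and n2: "\<forall>i>N2. w i = 0" "int n = (\<Sum>i\<le>N2. w i * T a b i)" by blast
  define L where "L = Suc (N1 + N2)"
  have "V a b L u = V a b L w" using n1 n2 sum_to_V[of N1 u L a b] sum_to_V[of N2 w L a b]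
    by (simp add: L_def)
  moreover have "adm a b u" "adm a b w" using hu hw by (auto simp: adm_iff)
  ultimately have "\<forall>i<L. u i = w i" using uniq[OF assms] by blast
  moreover have "\<forall>i\<ge>L. u i = w i" using n1 n2 by (auto simp: L_def)
  ultimately show "u = w" by (metis leI ext)
qed

end
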